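(* Let $R$ be a unital ring and let $S$ be an inverse submonoid with zero of the multiplicative monoid of $R$. Then there is a Boolean inverse submonoid $S''$ of the multiplicative monoid of $R$ such that $S\subseteq S''\subseteq R$.
   Context: A Boolean inverse monoid is an inverse monoid with zero in which every pair of compatible elements ($s^{-1}t$, $st^{-1}$ idempotents) has a join with respect to the natural partial order, multiplication distributes over these joins, and the idempotents form a Boolean algebra (a distributive lattice with bottom in which each principal order ideal is a unital Boolean algebra). *)

theory Defs
  imports Main
begin

definition inverse_submonoid_zero :: "'a::ring_1 set \<Rightarrow> bool" where
  "inverse_submonoid_zero S \<longleftrightarrow>
     1 \<in> S \<and> 0 \<in> S \<and> (\<forall>s\<in>S. \<forall>t\<in>S. s * t \<in> S) \<and>
     (\<forall>s\<in>S. \<exists>!t. t \<in> S \<and> s * t * s = s \<and> t * s * t = t)"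

definition sinv :: "'a::ring_1 set \<Rightarrow> 'a \<Rightarrow> 'a" where
  "sinv S s = (THE t. t \<in> S \<and> s * t * s = s \<and> t * s * t = t)"

definition idems :: "'a::ring_1 set \<Rightarrow> 'a set" where
  "idems S = {e \<in> S. e * e = e}"

definition nat_le :: "'a::ring_1 set \<Rightarrow> 'a \<Rightarrow> 'a \<Rightarrow> bool" where
  "nat_le S s t \<longleftrightarrow> (\<exists>e\<in>idems S. s = e * t)"

definition compatible :: "'a::ring_1 set \<Rightarrow> 'a \<Rightarrow> 'a \<Rightarrow> bool" where
  "compatible S s t \<longleftrightarrow> sinv S s * t \<in> idems S \<and> s * sinv S t \<in> idems S"

definition is_lub :: "'a set \<Rightarrow> ('a \<Rightarrow> 'a \<Rightarrow> bool) \<Rightarrow> 'a \<Rightarrow> 'a \<Rightarrow> 'a \<Rightarrow> bool" where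
  "is_lub A le x y z \<longleftrightarrow> z \<in> A \<and> le x z \<and> le y z \<and> (\<forall>w\<in>A. le x w \<and> le y w \<longrightarrow> le z w)"

definition is_glb :: "'a set \<Rightarrow> ('a \<Rightarrow> 'a \<Rightarrow> bool) \<Rightarrow> 'a \<Rightarrow> 'a \<Rightarrow> 'a \<Rightarrow> bool" where
  "is_glb A le x y z \<longleftrightarrow> z \<in> A \<and> le z x \<and> le z y \<and> (\<forall>w\<in>A. le w x \<and> le w y \<longrightarrow> le w z)"

text \<open>The idempotents, under the natural partial order, form a distributive lattice with
  bottom 0 in which every principal order ideal is a (unital) Boolean algebra.\<close>
definition boolean_idems :: "'a::ring_1 set \<Rightarrow> bool" where
  "boolean_idems S \<longleftrightarrow>
     (let E = idems S; le = nat_le S in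
       (\<forall>x\<in>E. \<forall>y\<in>E. \<exists>z. is_lub E le x y z) \<and>
       (\<forall>x\<in>E. \<forall>y\<in>E. \<exists>z. is_glb E le x y z) \<and>
       0 \<in> E \<and> (\<forall>x\<in>E. le 0 x) \<and>
       (\<forall>x y z u v w m. x \<in> E \<longrightarrow> y \<in> E \<longrightarrow> z \<in> E \<longrightarrow>
          is_lub E le y z u \<longrightarrow> is_glb E le x u m \<longrightarrow>
          is_glb E le x y v \<longrightarrow> is_glb E le x z w \<longrightarrow> is_lub E le v w m) \<and>
       (\<forall>e\<in>E. \<forall>f\<in>E. le f e \<longrightarrow>
          (\<exists>g\<in>E. le g e \<and> is_glb E le f g 0 \<and> is_lub E le f g e)))"

definition boolean_inverse_submonoid :: "'a::ring_1 set \<Rightarrow> bool" where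
  "boolean_inverse_submonoid S \<longleftrightarrow>
     inverse_submonoid_zero S \<and>
     (\<forall>s\<in>S. \<forall>t\<in>S. compatible S s t \<longrightarrow> (\<exists>j. is_lub S (nat_le S) s t j)) \<and>
     (\<forall>s\<in>S. \<forall>t\<in>S. \<forall>u\<in>S. \<forall>j. compatible S s t \<longrightarrow> is_lub S (nat_le S) s t j \<longrightarrow>
        is_lub S (nat_le S) (u * s) (u * t) (u * j) \<and>
        is_lub S (nat_le S) (s * u) (t * u) (j * u)) \<and>
     boolean_idems S"

end

theory Submission
  imports Defs
begin

locale balg =
  fixes B :: "'a::ring_1 set"
  assumes B0: "0 \<in> B" and B1: "1 \<in> B"
    and Bmul: "x \<in> B \<Longrightarrow> y \<in> B \<Longrightarrow> x * y \<in> B"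
    and Bcompl: "x \<in> B \<Longrightarrow> 1 - x \<in> B"
    and Bcomm: "x \<in> B \<Longrightarrow> y \<in> B \<Longrightarrow> x * y = y * x"
    and Bidem: "x \<in> B \<Longrightarrow> x * x = x"
begin

lemma Bjoin: "x \<in> B \<Longrightarrow> y \<in> B \<Longrightarrow> x + y - x * y \<in> B"
proof -
  assume "x \<in> B" "y \<in> B"
  then have "1 - (1 - x) * (1 - y) \<in> B" by (intro Bcompl Bmul)
  moreover have "1 - (1 - x) * (1 - y) = x + y - x * y" by (simp add: algebra_simps)
  ultimately show ?thesis by simp
qed

lemma Bdiff: "x \<in> B \<Longrightarrow> y \<in> B \<Longrightarrow> x - x * y \<in> B"
proof -
  assume "x \<in> B" "y \<in> B"
  then have "x * (1 - y) \<in> B" by (intro Bcompl Bmul)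
  then show ?thesis by (simp add: algebra_simps)
qed

lemma Bcomm3: "x \<in> B \<Longrightarrow> y \<in> B \<Longrightarrow> x * (y * z) = y * (x * z)"
  by (metis Bcomm mult.assoc)

definition W :: "'a \<Rightarrow> 'a \<Rightarrow> bool" where
  "W a b \<longleftrightarrow> a * b * a = a \<and> b * a * b = b \<and> a * b \<in> B \<and> b * a \<in> B \<and>
     (\<forall>e\<in>B. a * e * b \<in> B \<and> b * e * a \<in> B)"

definition IB :: "'a set" where "IB = {a. \<exists>b. W a b}"

lemma W_sym: "W a b \<Longrightarrow> W b a" unfolding W_def by blast

lemma W_B: "e \<in> B \<Longrightarrow> W e e"
  unfolding W_def by (simp add: Bidem Bmul)

lemma W_mult: assumes "W a a'" "W b b'" shows "W (a * b) (b' * a')"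
proof -
  from assms have h: "a * a' * a = a" "a' * a * a' = a'" "a * a' \<in> B" "a' * a \<in> B"
    "\<And>e. e\<in>B \<Longrightarrow> a * e * a' \<in> B" "\<And>e. e\<in>B \<Longrightarrow> a' * e * a \<in> B"
    "b * b' * b = b" "b' * b * b' = b'" "b * b' \<in> B" "b' * b \<in> B"
    "\<And>e. e\<in>B \<Longrightarrow> b * e * b' \<in> B" "\<And>e. e\<in>B \<Longrightarrow> b' * e * b \<in> B"
    unfolding W_def by auto
  have c: "(a' * a) * (b * b') = (b * b') * (a' * a)" by (rule Bcomm[OF h(4) h(9)])
  have 1: "a * b * (b' * a') * (a * b) = a * b"
  proof -
    have "a * b * (b' * a') * (a * b) = a * ((b * b') * (a' * a)) * b" by (simp add: mult.assoc)
    also have "\<dots> = a * ((a' * a) * (b * b')) * b" using c by simp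
    also have "\<dots> = (a * a' * a) * (b * b' * b)" by (simp add: mult.assoc)
    finally show ?thesis using h by simp
  qed
  have 2: "b' * a' * (a * b) * (b' * a') = b' * a'"
  proof -
    have "b' * a' * (a * b) * (b' * a') = b' * ((a' * a) * (b * b')) * a'" by (simp add: mult.assoc)
    also have "\<dots> = b' * ((b * b') * (a' * a)) * a'" using c by simp
    also have "\<dots> = (b' * b * b') * (a' * a * a')" by (simp add: mult.assoc)
    finally show ?thesis using h by simp
  qed
  have 3: "a * b * (b' * a') \<in> B" using h(5)[OF h(9)] by (simp add: mult.assoc)
  have 4: "b' * a' * (a * b) \<in> B" using h(12)[OF h(4)] by (simp add: mult.assoc)
  have 5: "\<forall>e\<in>B. a * b * e * (b' * a') \<in> B \<and> b' * a' * e * (a * b) \<in> B"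
  proof
    fix e assume e: "e \<in> B"
    have "a * (b * e * b') * a' \<in> B" using h(5) h(11) e by blast
    moreover have "b' * (a' * e * a) * b \<in> B" using h(6) h(12) e by blast
    ultimately show "a * b * e * (b' * a') \<in> B \<and> b' * a' * e * (a * b) \<in> B"
      by (simp add: mult.assoc)
  qed
  show ?thesis unfolding W_def using 1 2 3 4 5 by blast
qed


lemma WD: assumes "W a b"
  shows "a * b * a = a" "b * a * b = b" "a * b \<in> B" "b * a \<in> B"
    "\<And>e. e\<in>B \<Longrightarrow> a * e * b \<in> B" "\<And>e. e\<in>B \<Longrightarrow> b * e * a \<in> B"
  using assms unfolding W_def by auto

lemma idem_in_B: assumes "W a b" "a * a = a" shows "a \<in> B"
proof -
  note h = WD[OF assms(1)]
  have ap: "a * (a * b) = a * b" using assms(2) by (simp add: mult.assoc[symmetric])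
  have qa: "(b * a) * a = b * a" using assms(2) by (simp add: mult.assoc)
  have "(b * a) * (a * b) = b * (a * a) * b" by (simp add: mult.assoc)
  also have "\<dots> = b * a * b" using assms(2) by simp
  also have "\<dots> = b" using h by simp
  finally have b1: "(b * a) * (a * b) = b" .
  have "(a * b) * (b * a) = b" using b1 Bcomm[OF h(3) h(4)] by simp
  have "a * b * a = a * ((a * b) * (b * a)) * a"
    using \<open>(a * b) * (b * a) = b\<close> by (simp add: mult.assoc)
  also have "\<dots> = (a * (a * b)) * ((b * a) * a)" by (simp add: mult.assoc)
  also have "\<dots> = (a * b) * (b * a)" using ap qa by simp
  also have "\<dots> = b" by fact
  finally have "a = b" using h by simp
  then have "a = (b * a) * (a * b)" using b1 by simp
  then show ?thesis using Bmul[OF h(4) h(3)] by simp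
qed

lemma IB_mult: "a \<in> IB \<Longrightarrow> b \<in> IB \<Longrightarrow> a * b \<in> IB"
  unfolding IB_def using W_mult by blast

lemma W_IB: "W a b \<Longrightarrow> a \<in> IB" "W a b \<Longrightarrow> b \<in> IB"
  unfolding IB_def using W_sym by blast+

lemma W_uniq: assumes "W a b" "c \<in> IB" "a * c * a = a" "c * a * c = c" shows "c = b"
proof -
  note h = WD[OF assms(1)]
  from assms(2) obtain c' where c': "W c c'" unfolding IB_def by blast
  have "W (a * c) (c' * b)" using W_mult[OF assms(1) c'] .
  moreover have "(a * c) * (a * c) = a * c" using assms(3) by (simp add: mult.assoc[symmetric])
  ultimately have ac: "a * c \<in> B" using idem_in_B by blast
  have "W (c * a) (b * c')" using W_mult[OF c' assms(1)] .
  moreover have "(c * a) * (c * a) = c * a" using assms(4) by (simp add: mult.assoc[symmetric])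
  ultimately have ca: "c * a \<in> B" using idem_in_B by blast
  have "b = b * (a * c * a) * b" using h assms(3) by simp
  also have "\<dots> = ((b * a) * (c * a)) * b" by (simp add: mult.assoc)
  also have "\<dots> = ((c * a) * (b * a)) * b" using Bcomm[OF h(4) ca] by simp
  also have "\<dots> = c * (a * b)" using h by (simp add: mult.assoc)
  finally have b: "b = c * (a * b)" .
  have "a * b = (a * c * a) * b" using assms(3) by simp
  also have "\<dots> = (a * c) * (a * b)" by (simp add: mult.assoc)
  also have "\<dots> = (a * b) * (a * c)" using Bcomm[OF ac h(3)] by simp
  also have "\<dots> = a * c" using h by (simp add: mult.assoc[symmetric])
  finally have "a * b = a * c" .
  with b have "b = c * a * c" by (simp add: mult.assoc)
  then show ?thesis using assms(4) by simp
qed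

lemma sinv_eq: assumes "W a b" shows "sinv IB a = b"
  unfolding sinv_def
proof (rule the1_equality)
  show "\<exists>!t. t \<in> IB \<and> a * t * a = a \<and> t * a * t = t"
  proof (rule ex1I[of _ b])
    show "b \<in> IB \<and> a * b * a = a \<and> b * a * b = b" using assms W_IB WD by blast
    show "\<And>y. y \<in> IB \<and> a * y * a = a \<and> y * a * y = y \<Longrightarrow> y = b"
      using assms W_uniq by blast
  qed
  show "b \<in> IB \<and> a * b * a = a \<and> b * a * b = b" using assms W_IB WD by blast
qed

lemma sinv_W: "a \<in> IB \<Longrightarrow> W a (sinv IB a)"
proof -
  assume "a \<in> IB"
  then obtain b where "W a b" unfolding IB_def by blast
  then show ?thesis using sinv_eq by simp
qed

lemma IB_inv: "inverse_submonoid_zero IB"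
  unfolding inverse_submonoid_zero_def
proof (intro conjI ballI)
  show "1 \<in> IB" using W_B[OF B1] W_IB by blast
  show "0 \<in> IB" using W_B[OF B0] W_IB by blast
  show "\<And>s t. s \<in> IB \<Longrightarrow> t \<in> IB \<Longrightarrow> s * t \<in> IB" by (rule IB_mult)
  fix s assume "s \<in> IB"
  then obtain b where b: "W s b" unfolding IB_def by blast
  show "\<exists>!t. t \<in> IB \<and> s * t * s = s \<and> t * s * t = t"
  proof (rule ex1I[of _ b])
    show "b \<in> IB \<and> s * b * s = s \<and> b * s * b = b" using b W_IB WD by blast
    show "\<And>y. y \<in> IB \<and> s * y * s = s \<and> y * s * y = y \<Longrightarrow> y = b"
      using b W_uniq by blast
  qed
qed

lemma idems_IB: "idems IB = B"
proof
  show "idems IB \<subseteq> B" unfolding idems_def IB_def using idem_in_B by blast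
  show "B \<subseteq> idems IB" unfolding idems_def using W_B W_IB Bidem by blast
qed

lemma nat_le_IB: "nat_le IB x y \<longleftrightarrow> (\<exists>e\<in>B. x = e * y)"
  unfolding nat_le_def idems_IB ..


lemma le_B: "x \<in> B \<Longrightarrow> y \<in> B \<Longrightarrow> nat_le IB x y \<longleftrightarrow> x = x * y"
  unfolding nat_le_IB by (metis Bidem mult.assoc)

lemma le_antisym: "nat_le IB x y \<Longrightarrow> nat_le IB y x \<Longrightarrow> x = y"
  unfolding nat_le_IB
proof (elim bexE)
  fix e f assume e: "e \<in> B" "x = e * y" and f: "f \<in> B" "y = f * x"
  have "y = f * e * y" using e f by (simp add: mult.assoc)
  then have "e * y = e * f * e * y" by (metis mult.assoc)
  also have "\<dots> = f * e * y" using e f by (metis Bcomm Bidem mult.assoc)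
  finally show "x = y" using e \<open>y = f * e * y\<close> by simp
qed

lemma le_trans: "nat_le IB x y \<Longrightarrow> nat_le IB y z \<Longrightarrow> nat_le IB x z"
  unfolding nat_le_IB by (metis Bmul mult.assoc)

lemma le_refl: "nat_le IB x x"
  unfolding nat_le_IB using B1 by force

lemma lub_uniq: "is_lub A (nat_le IB) x y z \<Longrightarrow> is_lub A (nat_le IB) x y z' \<Longrightarrow> z = z'"
  unfolding is_lub_def using le_antisym by blast

lemma glb_uniq: "is_glb A (nat_le IB) x y z \<Longrightarrow> is_glb A (nat_le IB) x y z' \<Longrightarrow> z = z'"
  unfolding is_glb_def using le_antisym by blast

lemma B_lub: assumes "x \<in> B" "y \<in> B" shows "is_lub B (nat_le IB) x y (x + y - x * y)"
proof -
  have j: "x + y - x * y \<in> B" using assms Bjoin by blast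
  have xx: "x * x = x" "y * y = y" "y * x = x * y" using assms Bidem Bcomm by auto
  have xx2: "x * (x * y) = x * y" "y * (x * y) = x * y" "x * (y * y) = x * y"
    using xx by (metis mult.assoc)+
  show ?thesis unfolding is_lub_def
  proof (intro conjI ballI impI)
    show "x + y - x * y \<in> B" by (fact j)
    show "nat_le IB x (x + y - x * y)" using le_B[OF assms(1) j] xx xx2
      by (simp add: algebra_simps)
    show "nat_le IB y (x + y - x * y)" using le_B[OF assms(2) j] xx xx2
      by (simp add: algebra_simps)
    fix w assume w: "w \<in> B" "nat_le IB x w \<and> nat_le IB y w"
    then have "x = x * w" "y = y * w" using le_B assms by auto
    then show "nat_le IB (x + y - x * y) w" using le_B[OF j w(1)]
      by (simp add: algebra_simps)
  qed
qed

lemma B_glb: assumes "x \<in> B" "y \<in> B" shows "is_glb B (nat_le IB) x y (x * y)"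
proof -
  have j: "x * y \<in> B" using assms Bmul by blast
  have xx: "x * x = x" "y * y = y" "y * x = x * y" using assms Bidem Bcomm by auto
  show ?thesis unfolding is_glb_def
  proof (intro conjI ballI impI)
    show "x * y \<in> B" by (fact j)
    show "nat_le IB (x * y) x" using le_B[OF j assms(1)] xx by (metis mult.assoc)
    show "nat_le IB (x * y) y" using le_B[OF j assms(2)] xx by (metis mult.assoc)
    fix w assume w: "w \<in> B" "nat_le IB w x \<and> nat_le IB w y"
    then have "w = w * x" "w = w * y" using le_B assms by auto
    then show "nat_le IB w (x * y)" using le_B[OF w(1) j] by (metis mult.assoc)
  qed
qed

lemma boolean_IB: "boolean_idems IB"
  unfolding boolean_idems_def Let_def idems_IB
proof (intro conjI ballI allI impI)
  show "\<And>x y. x \<in> B \<Longrightarrow> y \<in> B \<Longrightarrow> \<exists>z. is_lub B (nat_le IB) x y z" using B_lub by blast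
  show "\<And>x y. x \<in> B \<Longrightarrow> y \<in> B \<Longrightarrow> \<exists>z. is_glb B (nat_le IB) x y z" using B_glb by blast
  show "0 \<in> B" by (fact B0)
  show "\<And>x. x \<in> B \<Longrightarrow> nat_le IB 0 x" using le_B B0 by simp
next
  fix x y z u v w m
  assume a: "x \<in> B" "y \<in> B" "z \<in> B" "is_lub B (nat_le IB) y z u" "is_glb B (nat_le IB) x u m"
    "is_glb B (nat_le IB) x y v" "is_glb B (nat_le IB) x z w"
  have u: "u = y + z - y * z" using lub_uniq[OF a(4) B_lub[OF a(2,3)]] .
  have uB: "u \<in> B" using a(4) unfolding is_lub_def by (elim conjE)
  have m: "m = x * u" using glb_uniq[OF a(5) B_glb[OF a(1) uB]] .
  have v: "v = x * y" using glb_uniq[OF a(6) B_glb[OF a(1,2)]] .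
  have w: "w = x * z" using glb_uniq[OF a(7) B_glb[OF a(1,3)]] .
  have "x * y + x * z - x * y * (x * z) = x * u"
  proof -
    have "x * y * (x * z) = x * (y * x) * z" by (simp add: mult.assoc)
    also have "\<dots> = (x * x) * y * z" using Bcomm[OF a(1,2)] by (simp add: mult.assoc)
    finally have "x * y * (x * z) = x * (y * z)" using Bidem[OF a(1)] by (simp add: mult.assoc)
    then show ?thesis unfolding u by (simp add: algebra_simps)
  qed
  then show "is_lub B (nat_le IB) v w m"
    using B_lub[of "x * y" "x * z"] Bmul a(1,2,3) m v w by simp
next
  fix e f assume a: "e \<in> B" "f \<in> B" "nat_le IB f e"
  then have fe: "f = f * e" using le_B by blast
  define g where "g = e - e * f"
  have gB: "g \<in> B" unfolding g_def using Bdiff a by blast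
  have ee: "e * e = e" "f * f = f" "f * e = f" using a Bidem fe by auto
  have ee2: "e * f = f" using ee Bcomm[OF a(1,2)] by simp
  have "g = g * e" unfolding g_def using ee ee2 by (simp add: algebra_simps mult.assoc)
  then have 1: "nat_le IB g e" using le_B gB a by blast
  have fg: "f * g = 0" unfolding g_def using ee ee2 by (simp add: algebra_simps mult.assoc[symmetric])
  have 2: "is_glb B (nat_le IB) f g 0" using B_glb[OF a(2) gB] fg by simp
  have "f + g - f * g = e" using fg ee2 unfolding g_def by simp
  then have 3: "is_lub B (nat_le IB) f g e" using B_lub[OF a(2) gB] by simp
  show "\<exists>g\<in>B. nat_le IB g e \<and> is_glb B (nat_le IB) f g 0 \<and> is_lub B (nat_le IB) f g e"
    using 1 2 3 gB by blast
qed


lemma sinv_B: "e \<in> B \<Longrightarrow> sinv IB e = e" using sinv_eq W_B by blast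

lemma sinv_mult: "a \<in> IB \<Longrightarrow> b \<in> IB \<Longrightarrow> sinv IB (a * b) = sinv IB b * sinv IB a"
  using sinv_eq W_mult sinv_W by blast

lemma sinv_sinv: "a \<in> IB \<Longrightarrow> sinv IB (sinv IB a) = a"
  using sinv_eq W_sym sinv_W by blast

lemma sinv_IB: "a \<in> IB \<Longrightarrow> sinv IB a \<in> IB"
  using sinv_W W_IB by blast

lemma B_IB: "e \<in> B \<Longrightarrow> e \<in> IB" using W_B W_IB by blast

lemma IBD: assumes "a \<in> IB"
  shows "a * sinv IB a * a = a" "sinv IB a * a * sinv IB a = sinv IB a"
    "a * sinv IB a \<in> B" "sinv IB a * a \<in> B"
    "\<And>e. e\<in>B \<Longrightarrow> a * e * sinv IB a \<in> B" "\<And>e. e\<in>B \<Longrightarrow> sinv IB a * e * a \<in> B"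
  using WD[OF sinv_W[OF assms]] by auto

lemma compat_facts:
  assumes s: "s \<in> IB" and t: "t \<in> IB" and p: "sinv IB s * t \<in> B" and q: "s * sinv IB t \<in> B"
  shows "sinv IB t * s = sinv IB s * t" "t * sinv IB s = s * sinv IB t"
    "s * (sinv IB s * t) = t * (sinv IB s * t)"
proof -
  have "sinv IB (sinv IB s * t) = sinv IB t * s"
    using sinv_mult[OF sinv_IB[OF s] t] sinv_sinv[OF s] by simp
  then show pp: "sinv IB t * s = sinv IB s * t" using sinv_B[OF p] by simp
  have "sinv IB (s * sinv IB t) = t * sinv IB s"
    using sinv_mult[OF s sinv_IB[OF t]] sinv_sinv[OF t] by simp
  then show qq: "t * sinv IB s = s * sinv IB t" using sinv_B[OF q] by simp
  define P where "P = sinv IB s * t"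
  define x where "x = s * P"
  define y where "y = t * P"
  define r1 where "r1 = s * P * sinv IB s"
  define r2 where "r2 = t * P * sinv IB t"
  have PB: "P \<in> B" using p P_def by simp
  have r1B: "r1 \<in> B" unfolding r1_def using IBD(5)[OF s PB] .
  have r2B: "r2 \<in> B" unfolding r2_def using IBD(5)[OF t PB] .
  have PP: "P * P = P" using Bidem[OF PB] .
  have "r1 * y = s * P * (sinv IB s * t) * P" unfolding r1_def y_def by (simp add: mult.assoc)
  also have "\<dots> = x" unfolding x_def using PP by (simp add: P_def[symmetric] mult.assoc)
  finally have x1: "x = r1 * y" by simp
  have "r2 * x = t * P * (sinv IB t * s) * P" unfolding r2_def x_def by (simp add: mult.assoc)
  also have "\<dots> = y" unfolding y_def using PP pp by (simp add: P_def[symmetric] mult.assoc)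
  finally have y1: "y = r2 * x" by simp
  have "y = r2 * (r1 * (r2 * x))" using x1 y1 by simp
  also have "\<dots> = (r2 * r2) * r1 * x" using Bcomm[OF r1B r2B] by (metis mult.assoc)
  also have "\<dots> = r1 * (r2 * x)" using Bidem[OF r2B] Bcomm[OF r1B r2B] by (metis mult.assoc)
  also have "\<dots> = x" using x1 y1 by simp
  finally show "s * (sinv IB s * t) = t * (sinv IB s * t)" unfolding x_def y_def P_def by simp
qed


lemma Bsum: "x \<in> B \<Longrightarrow> y \<in> B \<Longrightarrow> x * y = 0 \<Longrightarrow> x + y \<in> B"
  using Bjoin by fastforce

lemma W_orth:
  assumes A: "W a a'" and Bb: "W b b'" and d: "(a' * a) * (b' * b) = 0" and r: "(a * a') * (b * b') = 0"
  shows "W (a + b) (a' + b')"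
proof -
  note ha = WD[OF A] and hb = WD[OF Bb]
  have d2: "(b' * b) * (a' * a) = 0" using d Bcomm[OF ha(4) hb(4)] by simp
  have r2: "(b * b') * (a * a') = 0" using r Bcomm[OF ha(3) hb(3)] by simp
  have z1: "a * b' = 0"
  proof -
    have "a * b' = (a * a' * a) * (b' * b * b')" using ha hb by simp
    also have "\<dots> = a * ((a' * a) * (b' * b)) * b'" by (simp add: mult.assoc)
    finally show ?thesis using d by simp
  qed
  have z2: "b * a' = 0"
  proof -
    have "b * a' = (b * b' * b) * (a' * a * a')" using ha hb by simp
    also have "\<dots> = b * ((b' * b) * (a' * a)) * a'" by (simp add: mult.assoc)
    finally show ?thesis using d2 by simp
  qed
  have z3: "a' * b = 0"
  proof -
    have "a' * b = (a' * a * a') * (b * b' * b)" using ha hb by simp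
    also have "\<dots> = a' * ((a * a') * (b * b')) * b" by (simp add: mult.assoc)
    finally show ?thesis using r by simp
  qed
  have z4: "b' * a = 0"
  proof -
    have "b' * a = (b' * b * b') * (a * a' * a)" using ha hb by simp
    also have "\<dots> = b' * ((b * b') * (a * a')) * a" by (simp add: mult.assoc)
    finally show ?thesis using r2 by simp
  qed
  have ia: "a * (a' * a) = a" "a' * (a * a') = a'" "b * (b' * b) = b" "b' * (b * b') = b'"
    using ha hb by (simp_all add: mult.assoc)
  have e1: "(a + b) * (a' + b') * (a + b) = a + b"
    using z1 z2 z3 z4 ia by (simp add: algebra_simps)
  have e2: "(a' + b') * (a + b) * (a' + b') = a' + b'"
    using z1 z2 z3 z4 ia by (simp add: algebra_simps)
  have e3: "(a + b) * (a' + b') = a * a' + b * b'" using z1 z2 by (simp add: algebra_simps)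
  have e4: "(a' + b') * (a + b) = a' * a + b' * b" using z3 z4 by (simp add: algebra_simps)
  have c: "\<forall>e\<in>B. (a + b) * e * (a' + b') \<in> B \<and> (a' + b') * e * (a + b) \<in> B"
  proof
    fix e assume e: "e \<in> B"
    have y1: "a * e * b' = 0"
    proof -
      have "a * e * b' = (a * a' * a) * e * (b' * b * b')" using ha hb by simp
      also have "\<dots> = a * ((a' * a) * e * (b' * b)) * b'" by (simp add: mult.assoc)
      also have "(a' * a) * e * (b' * b) = e * ((a' * a) * (b' * b))"
        using Bcomm[OF ha(4) e] by (simp add: mult.assoc)
      finally show ?thesis using d by simp
    qed
    have y2: "b * e * a' = 0"
    proof -
      have "b * e * a' = (b * b' * b) * e * (a' * a * a')" using ha hb by simp
      also have "\<dots> = b * ((b' * b) * e * (a' * a)) * a'" by (simp add: mult.assoc)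
      also have "(b' * b) * e * (a' * a) = e * ((b' * b) * (a' * a))"
        using Bcomm[OF hb(4) e] by (simp add: mult.assoc)
      finally show ?thesis using d2 by simp
    qed
    have y3: "a' * e * b = 0"
    proof -
      have "a' * e * b = (a' * a * a') * e * (b * b' * b)" using ha hb by simp
      also have "\<dots> = a' * ((a * a') * e * (b * b')) * b" by (simp add: mult.assoc)
      also have "(a * a') * e * (b * b') = e * ((a * a') * (b * b'))"
        using Bcomm[OF ha(3) e] by (simp add: mult.assoc)
      finally show ?thesis using r by simp
    qed
    have y4: "b' * e * a = 0"
    proof -
      have "b' * e * a = (b' * b * b') * e * (a * a' * a)" using ha hb by simp
      also have "\<dots> = b' * ((b * b') * e * (a * a')) * a" by (simp add: mult.assoc)
      also have "(b * b') * e * (a * a') = e * ((b * b') * (a * a'))"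
        using Bcomm[OF hb(3) e] by (simp add: mult.assoc)
      finally show ?thesis using r2 by simp
    qed
    have "(a + b) * e * (a' + b') = a * e * a' + b * e * b'"
      using y1 y2 by (simp add: algebra_simps)
    moreover have "a * e * a' * (b * e * b') = 0"
    proof -
      have "a * e * a' * (b * e * b') = a * e * (a' * b) * e * b'" by (simp add: mult.assoc)
      then show ?thesis using z3 by simp
    qed
    ultimately have 1: "(a + b) * e * (a' + b') \<in> B" using Bsum ha(5) hb(5) e by simp
    have "(a' + b') * e * (a + b) = a' * e * a + b' * e * b"
      using y3 y4 by (simp add: algebra_simps)
    moreover have "a' * e * a * (b' * e * b) = 0"
    proof -
      have "a' * e * a * (b' * e * b) = a' * e * (a * b') * e * b" by (simp add: mult.assoc)
      then show ?thesis using z1 by simp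
    qed
    ultimately have 2: "(a' + b') * e * (a + b) \<in> B" using Bsum ha(6) hb(6) e by simp
    show "(a + b) * e * (a' + b') \<in> B \<and> (a' + b') * e * (a + b) \<in> B" using 1 2 by blast
  qed
  have "a * a' + b * b' \<in> B" using Bsum ha(3) hb(3) r by simp
  moreover have "a' * a + b' * b \<in> B" using Bsum ha(4) hb(4) d by simp
  ultimately show ?thesis unfolding W_def using e1 e2 e3 e4 c by simp
qed


definition J :: "'a \<Rightarrow> 'a \<Rightarrow> 'a" where "J s t = s + t - t * (sinv IB s * s)"

lemma compat_lub:
  assumes s: "s \<in> IB" and t: "t \<in> IB" and c: "compatible IB s t"
  shows "is_lub IB (nat_le IB) s t (J s t)"
proof -
  define s' where "s' = sinv IB s"
  define t' where "t' = sinv IB t"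
  have p: "s' * t \<in> B" and q: "s * t' \<in> B"
    using c unfolding compatible_def idems_IB s'_def t'_def by auto
  note cf = compat_facts[OF s t p[unfolded s'_def] q[unfolded t'_def], folded s'_def t'_def]
  note hs = IBD[OF s, folded s'_def] and ht = IBD[OF t, folded t'_def]
  define ds where "ds = s' * s"
  define P where "P = s' * t"
  have dsB: "ds \<in> B" unfolding ds_def using hs(4) .
  have PB: "P \<in> B" unfolding P_def using p .
  have cdsB: "1 - ds \<in> B" using Bcompl[OF dsB] .
  have dsds: "ds * ds = ds" using Bidem[OF dsB] .
  have Pds: "P * ds = P"
  proof -
    have "P * ds = s' * (t * s') * s" unfolding P_def ds_def by (simp add: mult.assoc)
    also have "\<dots> = (s' * s) * (t' * s)" using cf(2) by (simp add: mult.assoc)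
    also have "\<dots> = s' * s * s' * t" using cf(1) by (simp add: mult.assoc)
    also have "\<dots> = P" unfolding P_def using hs(2) by simp
    finally show ?thesis .
  qed
  have sP: "s * P = t * P" unfolding P_def using cf(3) .
  have Ws: "W s s'" using sinv_W[OF s] s'_def by simp
  have Wt: "W t t'" using sinv_W[OF t] t'_def by simp
  have Wu: "W (t * (1 - ds)) ((1 - ds) * t')" using W_mult[OF Wt W_B[OF cdsB]] .
  have d0: "(s' * s) * (((1 - ds) * t') * (t * (1 - ds))) = 0"
  proof -
    have "(s' * s) * (((1 - ds) * t') * (t * (1 - ds))) = (ds * (1 - ds)) * (t' * (t * (1 - ds)))"
      unfolding ds_def by (simp add: mult.assoc)
    moreover have "ds * (1 - ds) = 0" using dsds by (simp add: algebra_simps)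
    ultimately show ?thesis by simp
  qed
  have r0: "(s * s') * ((t * (1 - ds)) * ((1 - ds) * t')) = 0"
  proof -
    have "(1 - ds) * (1 - ds) = 1 - ds" using dsds by (simp add: algebra_simps)
    then have "(1 - ds) * ((1 - ds) * t') = (1 - ds) * t'" by (simp add: mult.assoc[symmetric])
    then have "(s * s') * ((t * (1 - ds)) * ((1 - ds) * t')) = s * (s' * t) * (1 - ds) * t'"
      by (simp add: mult.assoc)
    also have "\<dots> = s * (P - P * ds) * t'" unfolding P_def by (simp add: algebra_simps)
    finally show ?thesis using Pds by simp
  qed
  have Wj: "W (s + t * (1 - ds)) (s' + (1 - ds) * t')" using W_orth[OF Ws Wu d0 r0] .
  have jeq: "J s t = s + t * (1 - ds)" unfolding J_def ds_def s'_def by (simp add: algebra_simps)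
  have jIB: "J s t \<in> IB" using Wj W_IB jeq by simp
  have tds: "t * ds = t * P"
  proof -
    have "t * ds = (t * s') * s" unfolding ds_def by (simp add: mult.assoc)
    also have "\<dots> = s * (t' * s)" using cf(2) by (simp add: mult.assoc)
    also have "\<dots> = s * P" using cf(1) P_def by simp
    finally show ?thesis using sP by simp
  qed
  have up1: "nat_le IB s (J s t)"
    unfolding nat_le_IB
  proof (rule bexI[of _ "s * s'"])
    show "s * s' \<in> B" using hs(3) .
    have "s * s' * J s t = s * s' * s + s * (s' * t) * (1 - ds)" unfolding jeq
      by (simp add: algebra_simps)
    also have "\<dots> = s + s * (P - P * ds)" using hs(1) P_def by (simp add: algebra_simps)
    finally show "s = s * s' * J s t" using Pds by simp
  qed
  have up2: "nat_le IB t (J s t)"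
    unfolding nat_le_IB
  proof (rule bexI[of _ "t * t'"])
    show "t * t' \<in> B" using ht(3) .
    have "t * t' * J s t = t * (t' * s) + t * t' * t - t * t' * t * ds" unfolding jeq
      by (simp add: algebra_simps)
    also have "\<dots> = t * P + t - t * ds" using ht(1) cf(1) P_def by simp
    finally show "t = t * t' * J s t" using tds by simp
  qed
  have least: "nat_le IB (J s t) w" if w: "w \<in> IB" "nat_le IB s w" "nat_le IB t w" for w
  proof -
    obtain e1 e2 where e: "e1 \<in> B" "e2 \<in> B" "s = e1 * w" "t = e2 * w"
      using w unfolding nat_le_IB by blast
    define w' where "w' = sinv IB w"
    note hw = IBD[OF w(1), folded w'_def]
    have "s' = w' * e1" unfolding s'_def w'_def e(3) using sinv_mult[OF B_IB[OF e(1)] w(1)]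
      sinv_B[OF e(1)] by simp
    then have "t * ds = e2 * ((w * w') * e1) * e1 * w" unfolding ds_def e
      by (simp add: mult.assoc)
    also have "\<dots> = e2 * (e1 * (w * w')) * e1 * w" using Bcomm[OF hw(3) e(1)] by simp
    also have "\<dots> = e1 * e2 * (w * w' * w)"
      using Bcomm[OF e(1) e(2)] Bcomm[OF hw(3) e(1)] Bidem[OF e(1)]
      by (simp add: mult.assoc) (metis mult.assoc)
    finally have "t * ds = e1 * e2 * w" using hw(1) by simp
    then have "J s t = (e1 + e2 - e1 * e2) * w" unfolding J_def ds_def[symmetric] s'_def[symmetric]
      using e by (simp add: algebra_simps)
    then show ?thesis unfolding nat_le_IB using Bjoin[OF e(1,2)] by blast
  qed
  show ?thesis unfolding is_lub_def using jIB up1 up2 least by blast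
qed


lemma compat_left:
  assumes s: "s \<in> IB" and t: "t \<in> IB" and u: "u \<in> IB" and c: "compatible IB s t"
  shows "compatible IB (u * s) (u * t) \<and> J (u * s) (u * t) = u * J s t"
proof -
  define s' where "s' = sinv IB s"
  define t' where "t' = sinv IB t"
  define u' where "u' = sinv IB u"
  have p: "s' * t \<in> B" and q: "s * t' \<in> B"
    using c unfolding compatible_def idems_IB s'_def t'_def by auto
  note hs = IBD[OF s, folded s'_def] and ht = IBD[OF t, folded t'_def]
    and hu = IBD[OF u, folded u'_def]
  have ius: "sinv IB (u * s) = s' * u'" using sinv_mult[OF u s] s'_def u'_def by simp
  have iut: "sinv IB (u * t) = t' * u'" using sinv_mult[OF u t] t'_def u'_def by simp
  have "s' * (u' * u) * t = s' * (s * s') * (u' * u) * t" using hs(2)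
    by (simp add: mult.assoc)
  also have "\<dots> = s' * (u' * u) * (s * s') * t" using Bcomm[OF hs(3) hu(4)]
    by (simp add: mult.assoc)
  also have "\<dots> = (s' * (u' * u) * s) * (s' * t)" by (simp add: mult.assoc)
  finally have 1: "s' * u' * (u * t) \<in> B" using Bmul[OF hs(6)[OF hu(4)] p]
    by (simp add: mult.assoc)
  have 2: "u * s * (t' * u') \<in> B" using hu(5)[OF q] by (simp add: mult.assoc)
  have c2: "compatible IB (u * s) (u * t)"
    unfolding compatible_def idems_IB ius iut using 1 2 by simp
  have ts: "t * s' = s * t'" using compat_facts(2)[OF s t] p q s'_def t'_def by simp
  have "u * t * (s' * u' * (u * s)) = u * (t * s') * (u' * u) * s" by (simp add: mult.assoc)
  also have "\<dots> = u * (u' * u) * (t * s') * s" using Bcomm[OF q hu(4)] ts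
    by (simp add: mult.assoc)
  also have "\<dots> = (u * u' * u) * (t * s') * s" by (simp add: mult.assoc)
  finally have "u * t * (s' * u' * (u * s)) = u * t * (s' * s)" using hu(1)
    by (simp add: mult.assoc[symmetric])
  then have "J (u * s) (u * t) = u * J s t" unfolding J_def ius s'_def
    by (simp add: algebra_simps)
  then show ?thesis using c2 by simp
qed

lemma compat_right:
  assumes s: "s \<in> IB" and t: "t \<in> IB" and u: "u \<in> IB" and c: "compatible IB s t"
  shows "compatible IB (s * u) (t * u) \<and> J (s * u) (t * u) = J s t * u"
proof -
  define s' where "s' = sinv IB s"
  define t' where "t' = sinv IB t"
  define u' where "u' = sinv IB u"
  have p: "s' * t \<in> B" and q: "s * t' \<in> B"
    using c unfolding compatible_def idems_IB s'_def t'_def by auto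
  note hs = IBD[OF s, folded s'_def] and ht = IBD[OF t, folded t'_def]
    and hu = IBD[OF u, folded u'_def]
  have ius: "sinv IB (s * u) = u' * s'" using sinv_mult[OF s u] s'_def u'_def by simp
  have iut: "sinv IB (t * u) = u' * t'" using sinv_mult[OF t u] t'_def u'_def by simp
  have 1: "u' * s' * (t * u) \<in> B" using hu(6)[OF p] by (simp add: mult.assoc)
  have "s * (u * u') * t' = s * (u * u') * (t' * t) * t'" using ht(2) by (simp add: mult.assoc)
  also have "\<dots> = s * (t' * t) * (u * u') * t'" using Bcomm[OF hu(3) ht(4)]
    by (simp add: mult.assoc)
  also have "\<dots> = (s * t') * (t * (u * u') * t')" by (simp add: mult.assoc)
  finally have 2: "s * u * (u' * t') \<in> B" using Bmul[OF q ht(5)[OF hu(3)]]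
    by (simp add: mult.assoc)
  have c2: "compatible IB (s * u) (t * u)"
    unfolding compatible_def idems_IB ius iut using 1 2 by simp
  have "t * u * (u' * s' * (s * u)) = t * ((u * u') * (s' * s)) * u" by (simp add: mult.assoc)
  also have "\<dots> = t * ((s' * s) * (u * u')) * u" using Bcomm[OF hu(3) hs(4)] by simp
  also have "\<dots> = t * (s' * s) * (u * u' * u)" by (simp add: mult.assoc)
  finally have "t * u * (u' * s' * (s * u)) = t * (s' * s) * u" using hu(1) by simp
  then have "J (s * u) (t * u) = J s t * u" unfolding J_def ius s'_def
    by (simp add: algebra_simps)
  then show ?thesis using c2 by simp
qed

lemma IB_boolean: "boolean_inverse_submonoid IB"
  unfolding boolean_inverse_submonoid_def
proof (intro conjI ballI allI impI)
  show "inverse_submonoid_zero IB" by (fact IB_inv)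
  show "boolean_idems IB" by (fact boolean_IB)
  show "\<And>s t. s \<in> IB \<Longrightarrow> t \<in> IB \<Longrightarrow> compatible IB s t \<Longrightarrow> \<exists>j. is_lub IB (nat_le IB) s t j"
    using compat_lub by blast
next
  fix s t u j assume a: "s \<in> IB" "t \<in> IB" "u \<in> IB" "compatible IB s t"
    "is_lub IB (nat_le IB) s t j"
  have j: "j = J s t" using lub_uniq[OF a(5) compat_lub[OF a(1,2,4)]] .
  have us: "u * s \<in> IB" "u * t \<in> IB" "s * u \<in> IB" "t * u \<in> IB"
    using IB_mult a by auto
  show "is_lub IB (nat_le IB) (u * s) (u * t) (u * j)"
    using compat_lub[OF us(1,2)] compat_left[OF a(1-4)] j by simp
  show "is_lub IB (nat_le IB) (s * u) (t * u) (j * u)"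
    using compat_lub[OF us(3,4)] compat_right[OF a(1-4)] j by simp
qed

end

inductive_set BA :: "'a::ring_1 set \<Rightarrow> 'a set" for S where
  base: "e \<in> idems S \<Longrightarrow> e \<in> BA S"
| mul: "x \<in> BA S \<Longrightarrow> y \<in> BA S \<Longrightarrow> x * y \<in> BA S"
| compl: "x \<in> BA S \<Longrightarrow> 1 - x \<in> BA S"

context
  fixes S :: "'a::ring_1 set"
  assumes S: "inverse_submonoid_zero S"
begin

lemma S1: "1 \<in> S" and S0: "0 \<in> S" and Smul: "s \<in> S \<Longrightarrow> t \<in> S \<Longrightarrow> s * t \<in> S"
  using S unfolding inverse_submonoid_zero_def by auto

lemma Sinv: assumes "s \<in> S"
  shows "sinv S s \<in> S" "s * sinv S s * s = s" "sinv S s * s * sinv S s = sinv S s"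
proof -
  have "\<exists>!t. t \<in> S \<and> s * t * s = s \<and> t * s * t = t"
    using S assms unfolding inverse_submonoid_zero_def by blast
  from theI'[OF this] show "sinv S s \<in> S" "s * sinv S s * s = s"
    "sinv S s * s * sinv S s = sinv S s" unfolding sinv_def by auto
qed

lemma Suniq: assumes "s \<in> S" "t \<in> S" "s * t * s = s" "t * s * t = t"
  "u \<in> S" "s * u * s = s" "u * s * u = u" shows "t = u"
proof -
  have "\<exists>!t. t \<in> S \<and> s * t * s = s \<and> t * s * t = t"
    using S assms unfolding inverse_submonoid_zero_def by blast
  then show ?thesis using assms by blast
qed

lemma idem_mult_idem: assumes e: "e \<in> S" "e * e = e" and f: "f \<in> S" "f * f = f"
  shows "(e * f) * (e * f) = e * f"
proof -
  define a where "a = e * f"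
  define b where "b = sinv S a"
  have aS: "a \<in> S" unfolding a_def using Smul e f by blast
  note hb = Sinv[OF aS, folded b_def]
  define c where "c = f * b * e"
  have cS: "c \<in> S" unfolding c_def using Smul hb(1) e f by blast
  have "a * c * a = e * (f * f) * b * (e * e) * f" unfolding a_def c_def by (simp add: mult.assoc)
  also have "\<dots> = a * b * a" unfolding a_def using e f by (simp add: mult.assoc)
  finally have 1: "a * c * a = a" using hb by simp
  have "c * a * c = f * (b * a * b) * e" unfolding c_def a_def using e f
    by (simp add: mult.assoc) (metis mult.assoc)
  then have 2: "c * a * c = c" using hb c_def by simp
  have cb: "c = b" using Suniq[OF aS cS 1 2 hb(1) hb(2) hb(3)] .
  have bb: "b * b = b"
  proof -
    have "b * b = c * c" using cb by simp
    also have "\<dots> = f * (b * a * b) * e" unfolding c_def a_def using e f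
      by (simp add: mult.assoc)
    finally show ?thesis using hb c_def cb by simp
  qed
  have "a = b"
  proof (rule Suniq[OF hb(1) aS])
    show "b * a * b = b" "a * b * a = a" using hb by auto
    show "b \<in> S" by (fact hb(1))
    show "b * b * b = b" "b * b * b = b" using bb by auto
  qed
  then show ?thesis using bb a_def by simp
qed

lemma idem_comm: assumes e: "e \<in> S" "e * e = e" and f: "f \<in> S" "f * f = f"
  shows "e * f = f * e"
proof -
  have ef: "(e * f) * (e * f) = e * f" using idem_mult_idem e f .
  have fe: "(f * e) * (f * e) = f * e" using idem_mult_idem f e .
  have efS: "e * f \<in> S" and feS: "f * e \<in> S" using Smul e f by auto
  have 1: "e * f * (f * e) * (e * f) = e * f"
  proof -
    have "e * f * (f * e) * (e * f) = e * (f * f) * (e * e) * f" by (simp add: mult.assoc)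
    also have "\<dots> = (e * f) * (e * f)" using e f by (simp add: mult.assoc)
    finally show ?thesis using ef by simp
  qed
  have 2: "f * e * (e * f) * (f * e) = f * e"
  proof -
    have "f * e * (e * f) * (f * e) = f * (e * e) * (f * f) * e" by (simp add: mult.assoc)
    also have "\<dots> = (f * e) * (f * e)" using e f by (simp add: mult.assoc)
    finally show ?thesis using fe by simp
  qed
  have 3: "e * f * (e * f) * (e * f) = e * f" using ef by simp
  show ?thesis using Suniq[OF efS feS 1 2 efS 3 3] by simp
qed

lemma BA_idem_comm: "x \<in> BA S \<Longrightarrow> (\<forall>y \<in> BA S. x * y = y * x) \<and> x * x = x"
proof (induction rule: BA.induct)
  case (base e)
  then have e: "e \<in> S" "e * e = e" unfolding idems_def by auto
  have "\<forall>y \<in> BA S. e * y = y * e"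
  proof
    fix y assume "y \<in> BA S"
    then show "e * y = y * e"
    proof (induction rule: BA.induct)
      case (base f) then show ?case using idem_comm e unfolding idems_def by auto
    next
      case (mul x y) then show ?case by (metis mult.assoc)
    next
      case (compl x) then show ?case by (simp add: algebra_simps)
    qed
  qed
  then show ?case using e by simp
next
  case (mul x y)
  then show ?case by (metis mult.assoc)
next
  case (compl x)
  then show ?case by (simp add: algebra_simps)
qed

lemma idemsBA: "e \<in> idems S \<Longrightarrow> e \<in> BA S" by (rule BA.base)

lemma BA_conj: assumes s: "s \<in> S" "s' \<in> S" "s * s' * s = s" "s' * s * s' = s'"
  shows "x \<in> BA S \<Longrightarrow> s * x * s' \<in> BA S"
proof (induction rule: BA.induct)
  have ds: "s' * s \<in> idems S" unfolding idems_def using s Smul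
    by (simp add: mult.assoc[symmetric])
  case (base e)
  then have e: "e \<in> S" "e * e = e" unfolding idems_def by auto
  have c: "e * (s' * s) = (s' * s) * e" using idem_comm e ds unfolding idems_def by auto
  have "s * e * s' * (s * e * s') = s * (e * (s' * s)) * e * s'" by (simp add: mult.assoc)
  also have "\<dots> = (s * s' * s) * (e * e) * s'" using c by (simp add: mult.assoc)
  finally have "s * e * s' * (s * e * s') = s * e * s'" using s e by simp
  moreover have "s * e * s' \<in> S" using Smul s e by blast
  ultimately show ?case by (intro BA.base) (simp add: idems_def)
next
  have ds: "s' * s \<in> BA S" unfolding idems_def using s Smul
    by (intro BA.base) (simp add: idems_def mult.assoc[symmetric])
  case (mul x y)
  have c: "x * (s' * s) = (s' * s) * x" using BA_idem_comm[OF mul(1)] ds by blast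
  have "s * x * s' * (s * y * s') = s * (x * (s' * s)) * y * s'" by (simp add: mult.assoc)
  also have "\<dots> = (s * s' * s) * x * y * s'" using c by (simp add: mult.assoc)
  also have "\<dots> = s * (x * y) * s'" using s(3) by (simp add: mult.assoc)
  finally have "s * (x * y) * s' = s * x * s' * (s * y * s')" by simp
  then show ?case using BA.mul[OF mul(3) mul(4)] by simp
next
  have rs: "s * s' \<in> BA S" unfolding idems_def using s Smul
    by (intro BA.base) (simp add: idems_def mult.assoc[symmetric])
  case (compl x)
  have "s * s' * (1 - s * x * s') = s * s' - (s * s' * s) * x * s'"
    by (simp add: algebra_simps mult.assoc)
  also have "\<dots> = s * (1 - x) * s'" using s by (simp add: algebra_simps)
  finally show ?case using BA.mul[OF rs BA.compl[OF compl(2)]] by simp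
qed

lemma balg_BA: "balg (BA S)"
proof
  have "0 \<in> idems S" "1 \<in> idems S" using S0 S1 unfolding idems_def by auto
  then show "0 \<in> BA S" "1 \<in> BA S" by (auto intro: BA.base)
  show "\<And>x y. x \<in> BA S \<Longrightarrow> y \<in> BA S \<Longrightarrow> x * y \<in> BA S" by (rule BA.mul)
  show "\<And>x. x \<in> BA S \<Longrightarrow> 1 - x \<in> BA S" by (rule BA.compl)
  show "\<And>x y. x \<in> BA S \<Longrightarrow> y \<in> BA S \<Longrightarrow> x * y = y * x" using BA_idem_comm by blast
  show "\<And>x. x \<in> BA S \<Longrightarrow> x * x = x" using BA_idem_comm by blast
qed

lemma S_sub: "S \<subseteq> balg.IB (BA S)"
proof
  interpret balg "BA S" by (rule balg_BA)
  fix s assume s: "s \<in> S"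
  define s' where "s' = sinv S s"
  note h = Sinv[OF s, folded s'_def]
  have "W s s'" unfolding W_def
  proof (intro conjI ballI)
    show "s * s' * s = s" "s' * s * s' = s'" using h by auto
    show "s * s' \<in> BA S" "s' * s \<in> BA S" using h s Smul
      by (auto intro!: BA.base simp: idems_def mult.assoc[symmetric])
    fix e assume "e \<in> BA S"
    then show "s * e * s' \<in> BA S" "s' * e * s \<in> BA S"
      using BA_conj[OF s h(1) h(2) h(3)] BA_conj[OF h(1) s h(3) h(2)] by auto
  qed
  then show "s \<in> IB" unfolding IB_def by blast
qed

end

theorem proposition3p2:
  fixes S :: "'a::ring_1 set"
  assumes "inverse_submonoid_zero S"
  shows "\<exists>S''. boolean_inverse_submonoid S'' \<and> S \<subseteq> S''"
proof -
  interpret balg "BA S" by (rule balg_BA[OF assms])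
  show ?thesis using IB_boolean S_sub[OF assms] by blast
qed

end
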